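(* Let $1<\alpha\le2$, $\delta\in(1-\frac\alpha2,1)$, and let $f(x)=a_0+a_1x+\dots+a_nx^n$ be a real polynomial. Then $F:C^\delta(0,1)\to H^{-\alpha/2}_2$, $F(u)=\frac{d}{dx}f(u(\cdot))$, is well defined, and for every $R>0$ there is $C_R>0$ such that for all $u,v\in C^\delta(0,1)$ with $|u|_{C^\delta},|v|_{C^\delta}\le R$, $$|F(u)-F(v)|_{H^{-\alpha/2}_2}\le C_R\,|u-v|_{C^\delta}.$$
   Context: Let $e_k(x)=\sqrt2\sin(k\pi x)$, $k\ge1$, be the $L^2(0,1)$-orthonormal eigenfunctions of $A=-\partial_x^2$ with Dirichlet boundary conditions on $(0,1)$, with eigenvalues $\lambda_k=(k\pi)^2$. For $\gamma\in\mathbb R$, $H^\gamma_2$ is the space of $v=\sum_k v_ke_k$ with $|v|^2_{H^\gamma_2}=\sum_k\lambda_k^\gamma v_k^2<\infty$ (for $\gamma<0$ the completion of $L^2(0,1)$ in this norm). For $\delta\in(0,1)$, $C^\delta(0,1)$ is the space of bounded continuous functions on $[0,1]$ with norm $|g|_{C^\delta}=\sup_x|g(x)|+\sup_{x\ne y}|g(x)-g(y)|/|x-y|^\delta$. For $u\in C^\delta(0,1)$, $F(u)=\partial_x(f(u))$ is the distribution with coefficients $\langle F(u),e_k\rangle:=-\int_0^1 f(u(x))e_k'(x)\,dx$. *)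

theory Defs
  imports "HOL-Analysis.Analysis" "HOL-Computational_Algebra.Polynomial"
begin

text \<open>Dirichlet eigenfunctions e_k(x) = sqrt 2 sin(k pi x), their derivatives, eigenvalues.\<close>
definition eig_fun :: "nat \<Rightarrow> real \<Rightarrow> real" where
  "eig_fun k x = sqrt 2 * sin (real k * pi * x)"

definition eig_fun_deriv :: "nat \<Rightarrow> real \<Rightarrow> real" where
  "eig_fun_deriv k x = sqrt 2 * (real k * pi) * cos (real k * pi * x)"

definition eig_val :: "nat \<Rightarrow> real" where
  "eig_val k = (real k * pi)^2"

definition holder_quots :: "real \<Rightarrow> (real \<Rightarrow> real) \<Rightarrow> real set" where
  "holder_quots \<delta> g = {\<bar>g x - g y\<bar> / \<bar>x - y\<bar> powr \<delta> | x y. x \<in> {0..1} \<and> y \<in> {0..1} \<and> x \<noteq> y}"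

definition holder_space :: "real \<Rightarrow> (real \<Rightarrow> real) set" where
  "holder_space \<delta> = {g. continuous_on {0..1} g \<and> bdd_above (holder_quots \<delta> g)}"

definition holder_norm :: "real \<Rightarrow> (real \<Rightarrow> real) \<Rightarrow> real" where
  "holder_norm \<delta> g = (SUP x\<in>{0..1}. \<bar>g x\<bar>) + Sup (holder_quots \<delta> g)"

text \<open>Coefficients <F(u), e_k> = - int_0^1 f(u(x)) e_k'(x) dx, with f given by a real polynomial.\<close>
definition F_coef :: "real poly \<Rightarrow> (real \<Rightarrow> real) \<Rightarrow> nat \<Rightarrow> real" where
  "F_coef p u k = - integral {0..1} (\<lambda>x. poly p (u x) * eig_fun_deriv k x)"

text \<open>Squared H^gamma_2 norm series of a coefficient sequence c (indices k >= 1).\<close>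
definition H_terms :: "real \<Rightarrow> (nat \<Rightarrow> real) \<Rightarrow> nat \<Rightarrow> real" where
  "H_terms \<gamma> c k = eig_val (Suc k) powr \<gamma> * (c (Suc k))^2"

definition H_norm :: "real \<Rightarrow> (nat \<Rightarrow> real) \<Rightarrow> real" where
  "H_norm \<gamma> c = sqrt (\<Sum>k. H_terms \<gamma> c k)"

end

theory Submission
  imports Defs
begin

definition cphi :: "nat \<Rightarrow> real \<Rightarrow> real" where
  "cphi k x = cos (real k * pi * x)"

lemma cos_int_integral:
  fixes c :: real assumes "c \<noteq> 0"
  shows "((\<lambda>x. cos (c * pi * x)) has_integral (sin (c * pi) / (c * pi))) {0..1}"
proof -
  have d: "\<And>x. ((\<lambda>x. sin (c * pi * x) / (c * pi)) has_real_derivative cos (c * pi * x)) (at x within {0..1})"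
    using assms by (auto intro!: derivative_eq_intros)
  have "((\<lambda>x. cos (c * pi * x)) has_integral (sin (c * pi * 1) / (c * pi) - sin (c * pi * 0) / (c * pi))) {0..1}"
    by (rule fundamental_theorem_of_calculus) (use d in \<open>auto simp: has_real_derivative_iff_has_vector_derivative\<close>)
  then show ?thesis by simp
qed

lemma cos_intm_integral:
  fixes m :: int assumes "m \<noteq> 0"
  shows "((\<lambda>x. cos (of_int m * pi * x)) has_integral 0) {0..1}"
proof -
  have "sin (of_int m * pi) = 0" by (simp add: sin_zero_iff_int2)
  then show ?thesis using cos_int_integral[of "of_int m"] assms by simp
qed

lemma orth:
  assumes "j \<ge> 1" "k \<ge> 1"
  shows "((\<lambda>x. cphi j x * cphi k x) has_integral (if j = k then 1/2 else 0)) {0..1}"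
proof -
  have eq: "\<And>x. cphi j x * cphi k x = cos (of_int (int j - int k) * pi * x) / 2 + cos (of_int (int j + int k) * pi * x) / 2"
    unfolding cphi_def by (simp add: cos_times_cos algebra_simps)
  have i2: "((\<lambda>x. cos (of_int (int j + int k) * pi * x) / 2) has_integral 0) {0..1}"
    using has_integral_divide[OF cos_intm_integral[of "int j + int k"], of 2] assms by simp
  show ?thesis
  proof (cases "j = k")
    case True
    have i1: "((\<lambda>x. cos (of_int (int j - int k) * pi * x) / 2) has_integral 1/2) {0..1}"
      using True has_integral_const_real[of "1/2::real" 0 1] by simp
    show ?thesis unfolding eq using has_integral_add[OF i1 i2] True by simp
  next
    case False
    have i1: "((\<lambda>x. cos (of_int (int j - int k) * pi * x) / 2) has_integral 0) {0..1}"
      using has_integral_divide[OF cos_intm_integral[of "int j - int k"], of 2] False by simp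
    show ?thesis unfolding eq using has_integral_add[OF i1 i2] False by simp
  qed
qed

lemma cphi_cont[continuous_intros]: "continuous_on S (cphi k)"
  unfolding cphi_def by (intro continuous_intros)

lemma bessel:
  assumes S: "finite S" "\<And>k. k \<in> S \<Longrightarrow> k \<ge> 1"
    and r: "continuous_on {0..1} r"
  shows "2 * (\<Sum>k\<in>S. (integral {0..1} (\<lambda>x. r x * cphi k x))^2) \<le> integral {0..1} (\<lambda>x. (r x)^2)"
proof -
  define a where "a k = integral {0..1} (\<lambda>x. r x * cphi k x)" for k
  define s where "s x = (\<Sum>k\<in>S. a k * cphi k x)" for x
  have cs: "continuous_on {0..1} s" unfolding s_def by (intro continuous_intros)
  have int: "\<And>f::real\<Rightarrow>real. continuous_on {0..1} f \<Longrightarrow> f integrable_on {0..1}"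
    by (rule integrable_continuous_interval)
  have e1: "integral {0..1} (\<lambda>x. r x * s x) = (\<Sum>k\<in>S. (a k)^2)"
  proof -
    have "integral {0..1} (\<lambda>x. r x * s x) = integral {0..1} (\<lambda>x. \<Sum>k\<in>S. a k * (r x * cphi k x))"
      unfolding s_def by (simp add: sum_distrib_left algebra_simps)
    also have "\<dots> = (\<Sum>k\<in>S. integral {0..1} (\<lambda>x. a k * (r x * cphi k x)))"
      by (rule integral_sum) (auto intro!: int continuous_intros r S(1))
    also have "\<dots> = (\<Sum>k\<in>S. (a k)^2)"
      by (simp add: a_def power2_eq_square)
    finally show ?thesis .
  qed
  have e2: "integral {0..1} (\<lambda>x. (s x)^2) = (\<Sum>k\<in>S. (a k)^2) / 2"
  proof -
    have "integral {0..1} (\<lambda>x. (s x)^2) = integral {0..1} (\<lambda>x. \<Sum>j\<in>S. \<Sum>k\<in>S. a j * a k * (cphi j x * cphi k x))"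
      unfolding s_def power2_eq_square sum_product by (simp add: algebra_simps)
    also have "\<dots> = (\<Sum>j\<in>S. integral {0..1} (\<lambda>x. \<Sum>k\<in>S. a j * a k * (cphi j x * cphi k x)))"
      by (rule integral_sum) (auto intro!: int continuous_intros S(1))
    also have "\<dots> = (\<Sum>j\<in>S. \<Sum>k\<in>S. integral {0..1} (\<lambda>x. a j * a k * (cphi j x * cphi k x)))"
      by (intro sum.cong refl integral_sum) (auto intro!: int continuous_intros S(1))
    also have "\<dots> = (\<Sum>j\<in>S. \<Sum>k\<in>S. a j * a k * (if j = k then 1/2 else 0))"
      using orth S(2) by (intro sum.cong refl) (simp add: integral_unique)
    also have "\<dots> = (\<Sum>j\<in>S. (a j)^2 / 2)"
      by (intro sum.cong refl) (simp add: if_distrib S(1) power2_eq_square cong: if_cong)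
    finally show ?thesis by (simp add: sum_divide_distrib)
  qed
  have "0 \<le> integral {0..1} (\<lambda>x. (r x - 2 * s x)^2)"
    by (rule integral_nonneg) (auto intro!: int continuous_intros r cs)
  also have "integral {0..1} (\<lambda>x. (r x - 2 * s x)^2)
      = integral {0..1} (\<lambda>x. (r x)^2) - 4 * integral {0..1} (\<lambda>x. r x * s x) + 4 * integral {0..1} (\<lambda>x. (s x)^2)"
  proof -
    have "(\<lambda>x. (r x - 2 * s x)^2) = (\<lambda>x. ((r x)^2 - 4 * (r x * s x)) + 4 * (s x)^2)"
      by (auto simp: power2_eq_square algebra_simps)
    moreover have "integral {0..1} (\<lambda>x. ((r x)^2 - 4 * (r x * s x)) + 4 * (s x)^2)
       = integral {0..1} (\<lambda>x. (r x)^2 - 4 * (r x * s x)) + integral {0..1} (\<lambda>x. 4 * (s x)^2)"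
      by (rule integral_add) (auto intro!: int continuous_intros r cs)
    moreover have "integral {0..1} (\<lambda>x. (r x)^2 - 4 * (r x * s x)) = integral {0..1} (\<lambda>x. (r x)^2) - integral {0..1} (\<lambda>x. 4 * (r x * s x))"
      by (rule integral_diff) (auto intro!: int continuous_intros r cs)
    ultimately show ?thesis by simp
  qed
  finally show ?thesis unfolding e1 e2 a_def by simp
qed

definition rf :: "real \<Rightarrow> real" where "rf x = 1 - \<bar>1 - \<bar>x\<bar>\<bar>"

lemma rf_id: "x \<in> {0..1} \<Longrightarrow> rf x = x" unfolding rf_def by auto
lemma rf_range: "x \<in> {-1..2} \<Longrightarrow> rf x \<in> {0..1}" unfolding rf_def by auto
lemma rf_lip: "\<bar>rf x - rf y\<bar> \<le> \<bar>x - y\<bar>" unfolding rf_def by auto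
lemma rf_cont: "continuous_on S rf" unfolding rf_def by (intro continuous_intros)

lemma cphi_cont2[continuous_intros]: fixes f :: "real \<Rightarrow> real" assumes "continuous_on S f" shows "continuous_on S (\<lambda>x. cphi k (f x))"
  unfolding cphi_def by (intro continuous_intros assms)

lemma G_cont:
  assumes "continuous_on {0..1} g" "S \<subseteq> {-1..2}"
  shows "continuous_on S (\<lambda>x. g (rf x))"
proof -
  have "continuous_on S (g \<circ> rf)"
    by (rule continuous_on_compose[OF rf_cont continuous_on_subset[OF assms(1)]]) (use assms(2) rf_range in auto)
  then show ?thesis by (simp add: o_def)
qed

lemma L_shift: "integral {a..b} (\<lambda>x. f (x + c)) = integral {a+c..b+c} (f::real\<Rightarrow>real)"
  using integral_shift_real_ivl[of "a+c" c "b+c" f] by simp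

lemma L_refl: "integral {a..b} (\<lambda>x. f (c - x)) = integral {c-b..c-a} (f::real\<Rightarrow>real)"
proof -
  have "integral {a..b} (\<lambda>x. f (c - x)) = integral {a..b} (\<lambda>x. (\<lambda>t. f (- t)) (x + (-c)))" by simp
  also have "\<dots> = integral {a - c..b - c} (\<lambda>t. f (- t))" using L_shift[of a b "\<lambda>t. f (- t)" "-c"] by simp
  also have "\<dots> = integral {c-b..c-a} f" using Henstock_Kurzweil_Integration.integral_reflect_real[of "c-a" "c-b" f] by simp
  finally show ?thesis .
qed

lemma cphi_2: "cphi k (2 - z) = cphi k z"
proof -
  have "cphi k (2 - z) = cos (2 * pi * real k - real k * pi * z)" unfolding cphi_def by (simp add: algebra_simps)
  also have "\<dots> = cos (real k * pi * z)" using cos_2npi[of k] sin_2npi[of k] by (simp add: cos_diff mult.commute mult.left_commute)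
  finally show ?thesis unfolding cphi_def .
qed

lemma cphi_neg: "cphi k (- z) = cphi k z" unfolding cphi_def by simp

lemma shift_identity:
  assumes g: "continuous_on {0..1} g" and h: "0 \<le> h" "h \<le> 1"
  shows "integral {0..1} (\<lambda>x. g (rf (x + h)) * cphi k x) + integral {0..1} (\<lambda>x. g (rf (x - h)) * cphi k x)
       = 2 * cos (real k * pi * h) * integral {0..1} (\<lambda>x. g x * cphi k x)"
proof -
  define F where "F y = g (rf y) * cphi k (y - h)" for y
  define F2 where "F2 y = g (rf y) * cphi k (y + h)" for y
  have cF: "continuous_on S F" if "S \<subseteq> {-1..2}" for S
    unfolding F_def using that by (intro continuous_intros G_cont g) 
  have cF2: "continuous_on S F2" if "S \<subseteq> {-1..2}" for S
    unfolding F2_def using that by (intro continuous_intros G_cont g) 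
  have cg1: "continuous_on S (\<lambda>y. g y * cphi k (y - h))" if "S \<subseteq> {0..1}" for S
    by (intro continuous_intros continuous_on_subset[OF g] that)
  have cg2: "continuous_on S (\<lambda>y. g y * cphi k (y + h))" if "S \<subseteq> {0..1}" for S
    by (intro continuous_intros continuous_on_subset[OF g] that)
  have int: "\<And>f::real\<Rightarrow>real. \<And>a b. continuous_on {a..b} f \<Longrightarrow> f integrable_on {a..b}"
    by (rule integrable_continuous_interval)
  have A1: "integral {0..1} (\<lambda>x. g (rf (x + h)) * cphi k x) = integral {h..1+h} F"
    using L_shift[of 0 1 F h] by (simp add: F_def)
  have A2: "integral {h..1+h} F = integral {h..1} F + integral {1..1+h} F"
    using Henstock_Kurzweil_Integration.integral_combine[where a=h and c=1 and b="1+h" and f=F] h int[OF cF] by simp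
  have A3: "integral {h..1} F = integral {h..1} (\<lambda>y. g y * cphi k (y - h))"
    by (rule integral_cong) (use h in \<open>auto simp: F_def rf_id\<close>)
  have A4: "integral {1..1+h} F = integral {1-h..1} (\<lambda>y. g y * cphi k (y + h))"
  proof -
    have "integral {1-h..1} (\<lambda>y. g y * cphi k (y + h)) = integral {1-h..1} (\<lambda>z. F (2 - z))"
    proof (rule integral_cong)
      fix z assume z: "z \<in> {1-h..1}"
      have "rf (2 - z) = z" unfolding rf_def using z h by auto
      moreover have "cphi k (2 - z - h) = cphi k (z + h)" using cphi_2[of k "z+h"] by (simp add: algebra_simps)
      ultimately show "g z * cphi k (z + h) = F (2 - z)" by (simp add: F_def rf_id)
    qed
    also have "\<dots> = integral {1..1+h} F" using L_refl[of "1-h" 1 F 2] by simp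
    finally show ?thesis by simp
  qed
  have B1: "integral {0..1} (\<lambda>x. g (rf (x - h)) * cphi k x) = integral {-h..1-h} F2"
    using L_shift[of 0 1 F2 "-h"] by (simp add: F2_def)
  have B2: "integral {-h..1-h} F2 = integral {-h..0} F2 + integral {0..1-h} F2"
    using Henstock_Kurzweil_Integration.integral_combine[where a="-h" and c=0 and b="1-h" and f=F2] h int[OF cF2] by simp
  have B3: "integral {0..1-h} F2 = integral {0..1-h} (\<lambda>y. g y * cphi k (y + h))"
    by (rule integral_cong) (use h in \<open>auto simp: F2_def rf_id\<close>)
  have B4: "integral {-h..0} F2 = integral {0..h} (\<lambda>y. g y * cphi k (y - h))"
  proof -
    have "integral {0..h} (\<lambda>y. g y * cphi k (y - h)) = integral {0..h} (\<lambda>z. F2 (0 - z))"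
    proof (rule integral_cong)
      fix z assume z: "z \<in> {0..h}"
      have "rf (0 - z) = z" unfolding rf_def using z h by auto
      moreover have "cphi k (0 - z + h) = cphi k (z - h)" using cphi_neg[of k "z-h"] by (simp add: algebra_simps)
      ultimately show "g z * cphi k (z - h) = F2 (0 - z)" by (simp add: F2_def)
    qed
    also have "\<dots> = integral {-h..0} F2" using L_refl[of 0 h F2 0] by simp
    finally show ?thesis by simp
  qed
  have C1: "integral {0..h} (\<lambda>y. g y * cphi k (y - h)) + integral {h..1} (\<lambda>y. g y * cphi k (y - h))
      = integral {0..1} (\<lambda>y. g y * cphi k (y - h))"
    using Henstock_Kurzweil_Integration.integral_combine[where a=0 and c=h and b=1 and f="\<lambda>y. g y * cphi k (y - h)"] h int[OF cg1[of "{0..1}"]] by simp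
  have C2: "integral {0..1-h} (\<lambda>y. g y * cphi k (y + h)) + integral {1-h..1} (\<lambda>y. g y * cphi k (y + h))
      = integral {0..1} (\<lambda>y. g y * cphi k (y + h))"
    using Henstock_Kurzweil_Integration.integral_combine[where a=0 and c="1-h" and b=1 and f="\<lambda>y. g y * cphi k (y + h)"] h int[OF cg2[of "{0..1}"]] by simp
  have C3: "integral {0..1} (\<lambda>y. g y * cphi k (y - h)) + integral {0..1} (\<lambda>y. g y * cphi k (y + h))
      = integral {0..1} (\<lambda>y. g y * cphi k (y - h) + g y * cphi k (y + h))"
    by (rule integral_add[symmetric]) (auto intro!: int cg1 cg2)
  have C4: "(\<lambda>y. g y * cphi k (y - h) + g y * cphi k (y + h)) = (\<lambda>y. 2 * cos (real k * pi * h) * (g y * cphi k y))"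
    by (auto simp: cphi_def algebra_simps cos_diff cos_add)
  show ?thesis
    unfolding A1 A2 A3 A4 B1 B2 B3 B4
    using C1 C2 C3 C4 by simp
qed

definition cc :: "(real \<Rightarrow> real) \<Rightarrow> nat \<Rightarrow> real" where
  "cc g k = integral {0..1} (\<lambda>x. g x * cphi k x)"

lemma block:
  assumes g: "continuous_on {0..1} g" and L: "0 \<le> L" and d: "0 < \<delta>"
    and hol: "\<And>x y. x \<in> {0..1} \<Longrightarrow> y \<in> {0..1} \<Longrightarrow> \<bar>g x - g y\<bar> \<le> L * \<bar>x - y\<bar> powr \<delta>"
    and N: "N \<ge> 1"
  shows "(\<Sum>k\<in>{N..<2*N}. (cc g k)^2) \<le> L^2 / 2 * ((1 / (2 * real N)) powr \<delta>)^2"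
proof -
  define h where "h = 1 / (2 * real N)"
  have h0: "0 < h" and h1: "h \<le> 1/2" using N by (auto simp: h_def field_simps)
  define r where "r x = g x - (g (rf (x + h)) + g (rf (x - h))) / 2" for x
  have cG: "continuous_on {-1..2} (\<lambda>x. g (rf x))" by (rule G_cont[OF g]) auto
  have cGp: "continuous_on {0..1} (\<lambda>x. g (rf (x + h)))"
    by (rule continuous_on_compose2[OF cG]) (use h0 h1 in \<open>auto intro!: continuous_intros\<close>)
  have cGm: "continuous_on {0..1} (\<lambda>x. g (rf (x - h)))"
    by (rule continuous_on_compose2[OF cG]) (use h0 h1 in \<open>auto intro!: continuous_intros\<close>)
  have cr: "continuous_on {0..1} r" unfolding r_def by (intro continuous_intros g cGp cGm) auto
  have int: "\<And>f::real\<Rightarrow>real. continuous_on {0..1} f \<Longrightarrow> f integrable_on {0..1}"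
    by (rule integrable_continuous_interval)
  have rc: "integral {0..1} (\<lambda>x. r x * cphi k x) = (1 - cos (real k * pi * h)) * cc g k" for k
  proof -
    have "integral {0..1} (\<lambda>x. r x * cphi k x) = integral {0..1} (\<lambda>x. g x * cphi k x - 
       ((g (rf (x + h)) * cphi k x) + (g (rf (x - h)) * cphi k x)) / 2)"
      unfolding r_def by (simp add: algebra_simps add_divide_distrib)
    also have "\<dots> = integral {0..1} (\<lambda>x. g x * cphi k x) - 
       integral {0..1} (\<lambda>x. ((g (rf (x + h)) * cphi k x) + (g (rf (x - h)) * cphi k x)) / 2)"
      by (rule integral_diff) (auto intro!: int continuous_intros g cGp cGm)
    also have "integral {0..1} (\<lambda>x. ((g (rf (x + h)) * cphi k x) + (g (rf (x - h)) * cphi k x)) / 2)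
       = (integral {0..1} (\<lambda>x. g (rf (x + h)) * cphi k x) + integral {0..1} (\<lambda>x. g (rf (x - h)) * cphi k x)) / 2"
      by (subst integral_divide, subst integral_add) (auto intro!: int continuous_intros g cGp cGm)
    also have "\<dots> = cos (real k * pi * h) * cc g k"
      using shift_identity[OF g, of h k] h0 h1 by (simp add: cc_def)
    finally show ?thesis by (simp add: cc_def algebra_simps)
  qed
  have rb: "\<bar>r x\<bar> \<le> L * h powr \<delta>" if x: "x \<in> {0..1}" for x
  proof -
    have b: "\<bar>g x - g (rf (x + s))\<bar> \<le> L * h powr \<delta>" if "\<bar>s\<bar> \<le> h" for s
    proof -
      have "x + s \<in> {-1..2}" using x that h1 by auto
      then have "rf (x + s) \<in> {0..1}" by (rule rf_range)
      then have "\<bar>g x - g (rf (x + s))\<bar> \<le> L * \<bar>x - rf (x + s)\<bar> powr \<delta>" using hol x by auto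
      also have "\<bar>x - rf (x + s)\<bar> \<le> h"
        using rf_lip[of x "x+s"] rf_id[OF x] that by simp
      then have "L * \<bar>x - rf (x + s)\<bar> powr \<delta> \<le> L * h powr \<delta>"
        by (intro mult_left_mono powr_mono2 L) (use d in auto)
      finally show ?thesis .
    qed
    have "r x = ((g x - g (rf (x + h))) + (g x - g (rf (x + (- h))))) / 2" by (simp add: r_def field_simps)
    then have "\<bar>r x\<bar> \<le> (\<bar>g x - g (rf (x + h))\<bar> + \<bar>g x - g (rf (x + (- h)))\<bar>) / 2" by simp
    also have "\<dots> \<le> (L * h powr \<delta> + L * h powr \<delta>) / 2"
      using b[of h] b[of "-h"] h0 by (intro divide_right_mono add_mono) auto
    finally show ?thesis by simp
  qed
  have "integral {0..1} (\<lambda>x. (r x)^2) \<le> integral {0..1} (\<lambda>x::real. (L * h powr \<delta>)^2)"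
  proof (rule Henstock_Kurzweil_Integration.integral_le)
    show "(\<lambda>x. (r x)\<^sup>2) integrable_on {0..1}" by (auto intro!: int continuous_intros cr)
    show "(\<lambda>x::real. (L * h powr \<delta>)\<^sup>2) integrable_on {0..1}" by (rule Henstock_Kurzweil_Integration.integrable_const_ivl)
    fix x :: real assume "x \<in> {0..1}"
    then have "\<bar>r x\<bar> \<le> L * h powr \<delta>" by (rule rb)
    from power_mono[OF this abs_ge_zero, of 2] show "(r x)\<^sup>2 \<le> (L * h powr \<delta>)\<^sup>2" by simp
  qed
  also have "\<dots> = (L * h powr \<delta>)^2" by simp
  finally have I: "integral {0..1} (\<lambda>x. (r x)^2) \<le> (L * h powr \<delta>)^2" .
  have B: "2 * (\<Sum>k\<in>{N..<2*N}. (integral {0..1} (\<lambda>x. r x * cphi k x))^2) \<le> integral {0..1} (\<lambda>x. (r x)^2)"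
    by (rule bessel[OF _ _ cr]) (use N in auto)
  have "(\<Sum>k\<in>{N..<2*N}. (cc g k)^2) \<le> (\<Sum>k\<in>{N..<2*N}. (integral {0..1} (\<lambda>x. r x * cphi k x))^2)"
  proof (rule sum_mono)
    fix k assume k: "k \<in> {N..<2*N}"
    have "pi / 2 \<le> real k * pi * h" using k N by (auto simp: h_def field_simps)
    moreover have "real k * pi * h \<le> pi" using k N by (auto simp: h_def field_simps)
    ultimately have "cos (real k * pi * h) \<le> cos (pi/2)" by (intro cos_monotone_0_pi_le) auto
    then have "1 \<le> 1 - cos (real k * pi * h)" by simp
    then have "1 * (cc g k)^2 \<le> (1 - cos (real k * pi * h))^2 * (cc g k)^2"
      by (intro mult_right_mono) (auto simp: power2_eq_square intro: order_trans[OF _ mult_mono[of 1 _ 1]])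
    then show "(cc g k)^2 \<le> (integral {0..1} (\<lambda>x. r x * cphi k x))^2" by (simp add: rc power_mult_distrib)
  qed
  with B I have "2 * (\<Sum>k\<in>{N..<2*N}. (cc g k)^2) \<le> (L * h powr \<delta>)^2" by linarith
  then show ?thesis by (simp add: h_def power_mult_distrib)
qed

lemma powr_aux: fixes X :: real assumes "X > 0"
  shows "X powr s * ((1 / X) powr d)^2 = X powr (s - 2 * d)"
proof -
  have "(1 / X) powr d = X powr (- d)" using assms by (simp add: powr_minus_divide powr_divide)
  then have "((1 / X) powr d)^2 = X powr (- 2 * d)"
    using assms by (simp add: power2_eq_square powr_add[symmetric])
  then show ?thesis by (simp add: powr_add[symmetric])
qed

lemma powr_aux2: "(2 ^ n :: real) powr e = (2 powr e) ^ n"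
proof -
  have "(2 ^ n :: real) = 2 powr real n" by (simp add: powr_realpow)
  then have "(2 ^ n :: real) powr e = 2 powr (real n * e)" by (simp add: powr_powr)
  also have "\<dots> = (2 powr e) powr real n" by (simp add: powr_powr mult.commute)
  also have "\<dots> = (2 powr e) ^ n" by (simp add: powr_realpow)
  finally show ?thesis .
qed

lemma dyadic_split:
  fixes t :: "nat \<Rightarrow> real"
  shows "(\<Sum>k\<in>{1..<2^J}. t k) = (\<Sum>j<J. \<Sum>k\<in>{2^j..<2*2^j}. t k)"
proof (induction J)
  case 0 then show ?case by simp
next
  case (Suc J)
  have "(\<Sum>k\<in>{1..<2^Suc J}. t k) = (\<Sum>k\<in>{1..<2^J}. t k) + (\<Sum>k\<in>{2^J..<2*2^J}. t k)"
    using sum.atLeastLessThan_concat[of 1 "2^J" "2*2^J" t] by simp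
  then show ?case using Suc by simp
qed

lemma weighted_sum:
  assumes g: "continuous_on {0..1} g" and L: "0 \<le> L" and d: "0 < \<delta>"
    and hol: "\<And>x y. x \<in> {0..1} \<Longrightarrow> y \<in> {0..1} \<Longrightarrow> \<bar>g x - g y\<bar> \<le> L * \<bar>x - y\<bar> powr \<delta>"
    and s: "0 \<le> s" "s < 2 * \<delta>"
  shows "summable (\<lambda>k. (real (Suc k) * pi) powr s * (cc g (Suc k))^2)"
    and "(\<Sum>k. (real (Suc k) * pi) powr s * (cc g (Suc k))^2) \<le> L^2 * (pi powr s / (2 * (1 - 2 powr (s - 2 * \<delta>))))"
proof -
  define q where "q = (2::real) powr (s - 2 * \<delta>)"
  have q0: "0 < q" by (simp add: q_def)
  have q1: "q < 1" using powr_less_mono[of "s - 2 * \<delta>" 0 "2::real"] s by (simp add: q_def)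
  define t where "t k = (real k * pi) powr s * (cc g k)^2" for k
  have t0: "0 \<le> t k" for k by (simp add: t_def)
  define B where "B = L^2 * (pi powr s / (2 * (1 - q)))"
  have blk: "(\<Sum>k\<in>{2^j..<2*2^j}. t k) \<le> L^2 / 2 * pi powr s * q ^ j" for j
  proof -
    define N :: nat where "N = 2^j"
    have N: "N \<ge> 1" by (simp add: N_def)
    have "(\<Sum>k\<in>{N..<2*N}. t k) \<le> (\<Sum>k\<in>{N..<2*N}. (real (2*N) * pi) powr s * (cc g k)^2)"
      unfolding t_def
    proof (rule sum_mono, rule mult_right_mono)
      fix k assume "k \<in> {N..<2*N}"
      then show "(real k * pi) powr s \<le> (real (2 * N) * pi) powr s"
        using s by (intro powr_mono2) auto
    qed simp
    also have "\<dots> = (real (2*N) * pi) powr s * (\<Sum>k\<in>{N..<2*N}. (cc g k)^2)"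
      by (simp add: sum_distrib_left)
    also have "\<dots> \<le> (real (2*N) * pi) powr s * (L^2 / 2 * ((1 / (2 * real N)) powr \<delta>)^2)"
      by (intro mult_left_mono block[OF g L d hol N]) auto
    also have "\<dots> = L^2 / 2 * pi powr s * ((2 * real N) powr s * ((1 / (2 * real N)) powr \<delta>)^2)"
      by (simp add: powr_mult)
    also have "\<dots> = L^2 / 2 * pi powr s * (2 * real N) powr (s - 2 * \<delta>)"
      using N by (subst powr_aux) auto
    also have "(2 * real N) = 2 ^ Suc j" by (simp add: N_def)
    also have "(2 ^ Suc j :: real) powr (s - 2 * \<delta>) = q ^ Suc j" unfolding q_def by (rule powr_aux2)
    also have "L^2 / 2 * pi powr s * q ^ Suc j \<le> L^2 / 2 * pi powr s * q ^ j"
      using q0 q1 by (intro mult_left_mono) (auto simp: power_Suc mult_le_cancel_right1 intro: mult_left_le_one_le)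
    finally show ?thesis by (simp add: N_def)
  qed
  have part: "(\<Sum>k\<in>{1..<2^J}. t k) \<le> B" for J
  proof -
    have "(\<Sum>k\<in>{1..<2^J}. t k) \<le> (\<Sum>j<J. L^2 / 2 * pi powr s * q ^ j)"
      unfolding dyadic_split by (intro sum_mono blk)
    also have "\<dots> = L^2 / 2 * pi powr s * (\<Sum>j<J. q ^ j)" by (simp add: sum_distrib_left)
    also have "(\<Sum>j<J. q ^ j) \<le> 1 / (1 - q)"
    proof -
      have "(\<Sum>j<J. q ^ j) = (1 - q ^ J) / (1 - q)" using q1 by (simp add: sum_gp_strict)
      also have "\<dots> \<le> 1 / (1 - q)" using q0 q1 by (intro divide_right_mono) auto
      finally show ?thesis .
    qed
    then have "L^2 / 2 * pi powr s * (\<Sum>j<J. q ^ j) \<le> L^2 / 2 * pi powr s * (1 / (1 - q))"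
      by (intro mult_left_mono) auto
    also have "\<dots> = B" by (simp add: B_def)
    finally show ?thesis .
  qed
  have ps: "(\<Sum>i<n. t (Suc i)) \<le> B" for n
  proof -
    have "(\<Sum>i<n. t (Suc i)) = (\<Sum>k\<in>{Suc 0..<Suc n}. t k)"
      by (subst sum.shift_bounds_Suc_ivl) (simp add: lessThan_atLeast0)
    also have "\<dots> \<le> (\<Sum>k\<in>{1..<2^n}. t k)"
    proof (rule sum_mono2)
      have hn: "n < (2::nat)^n" by (rule less_exp)
      show "{Suc 0..<Suc n} \<subseteq> {1..<2^n}"
      proof
        fix x assume "x \<in> {Suc 0..<Suc n}"
        then have "Suc 0 \<le> x" "x < Suc n" by auto
        with hn have "1 \<le> x" "x < 2^n" by linarith+
        then show "x \<in> {1..<2^n}" by simp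
      qed
    qed (auto simp: t0)
    also have "\<dots> \<le> B" by (rule part)
    finally show ?thesis .
  qed
  show sm: "summable (\<lambda>k. (real (Suc k) * pi) powr s * (cc g (Suc k))^2)"
    using summableI_nonneg_bounded[of "\<lambda>i. t (Suc i)" B] t0 ps by (simp add: t_def)
  show "(\<Sum>k. (real (Suc k) * pi) powr s * (cc g (Suc k))^2) \<le> L^2 * (pi powr s / (2 * (1 - 2 powr (s - 2 * \<delta>))))"
    using suminf_le_const[OF sm, of B] ps by (simp add: t_def B_def q_def)
qed

lemma polyA: fixes p :: "real poly" assumes R: "0 \<le> R"
  shows "\<exists>B\<ge>0. \<forall>a. \<bar>a\<bar> \<le> R \<longrightarrow> \<bar>poly p a\<bar> \<le> B"
proof (induction p)
  case 0 then show ?case by auto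
next
  case (pCons c q)
  then obtain B where B: "B \<ge> 0" "\<And>a. \<bar>a\<bar> \<le> R \<Longrightarrow> \<bar>poly q a\<bar> \<le> B" by auto
  show ?case
  proof (intro exI[of _ "\<bar>c\<bar> + R * B"] conjI allI impI)
    show "0 \<le> \<bar>c\<bar> + R * B" using R B by simp
    fix a :: real assume a: "\<bar>a\<bar> \<le> R"
    have "\<bar>a * poly q a\<bar> \<le> R * B" unfolding abs_mult by (intro mult_mono a B(2)) (use R in auto)
    then show "\<bar>poly (pCons c q) a\<bar> \<le> \<bar>c\<bar> + R * B" by (simp add: abs_triangle_ineq order_trans[OF abs_triangle_ineq])
  qed
qed

lemma polyB: fixes p :: "real poly" assumes R: "0 \<le> R"
  shows "\<exists>L\<ge>0. \<forall>a b. \<bar>a\<bar> \<le> R \<longrightarrow> \<bar>b\<bar> \<le> R \<longrightarrow> \<bar>poly p a - poly p b\<bar> \<le> L * \<bar>a - b\<bar>"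
proof (induction p)
  case 0 then show ?case by auto
next
  case (pCons c q)
  then obtain L where L: "L \<ge> 0" "\<And>a b. \<bar>a\<bar> \<le> R \<Longrightarrow> \<bar>b\<bar> \<le> R \<Longrightarrow> \<bar>poly q a - poly q b\<bar> \<le> L * \<bar>a - b\<bar>" by auto
  obtain B where B: "B \<ge> 0" "\<And>a. \<bar>a\<bar> \<le> R \<Longrightarrow> \<bar>poly q a\<bar> \<le> B" using polyA[OF R, of q] by auto
  show ?case
  proof (intro exI[of _ "B + R * L"] conjI allI impI)
    show "0 \<le> B + R * L" using R B L by simp
    fix a b :: real assume a: "\<bar>a\<bar> \<le> R" and b: "\<bar>b\<bar> \<le> R"
    have e: "poly (pCons c q) a - poly (pCons c q) b = (a - b) * poly q a + b * (poly q a - poly q b)"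
      by (simp add: algebra_simps)
    have 1: "\<bar>(a - b) * poly q a\<bar> \<le> \<bar>a - b\<bar> * B" unfolding abs_mult by (intro mult_left_mono B(2) a) auto
    have 2: "\<bar>b * (poly q a - poly q b)\<bar> \<le> R * (L * \<bar>a - b\<bar>)" unfolding abs_mult
      by (intro mult_mono b L(2) a) (use R in auto)
    have "\<bar>poly (pCons c q) a - poly (pCons c q) b\<bar> \<le> \<bar>(a - b) * poly q a\<bar> + \<bar>b * (poly q a - poly q b)\<bar>"
      unfolding e by (rule abs_triangle_ineq)
    also have "\<dots> \<le> \<bar>a - b\<bar> * B + R * (L * \<bar>a - b\<bar>)" using 1 2 by linarith
    also have "\<dots> = (B + R * L) * \<bar>a - b\<bar>" by (simp add: algebra_simps)
    finally show "\<bar>poly (pCons c q) a - poly (pCons c q) b\<bar> \<le> (B + R * L) * \<bar>a - b\<bar>" .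
  qed
qed

lemma polyC: fixes p :: "real poly" assumes R: "0 \<le> R"
  shows "\<exists>K\<ge>0. \<forall>a b a' b'. \<bar>a\<bar> \<le> R \<longrightarrow> \<bar>b\<bar> \<le> R \<longrightarrow> \<bar>a'\<bar> \<le> R \<longrightarrow> \<bar>b'\<bar> \<le> R \<longrightarrow>
     \<bar>poly p a - poly p b - (poly p a' - poly p b')\<bar> \<le> K * (\<bar>(a - b) - (a' - b')\<bar> + \<bar>a' - b'\<bar> * (\<bar>a - a'\<bar> + \<bar>b - b'\<bar>))"
proof (induction p)
  case 0 then show ?case by auto
next
  case (pCons c q)
  then obtain K where K: "K \<ge> 0" "\<And>a b a' b'. \<bar>a\<bar> \<le> R \<Longrightarrow> \<bar>b\<bar> \<le> R \<Longrightarrow> \<bar>a'\<bar> \<le> R \<Longrightarrow> \<bar>b'\<bar> \<le> R \<Longrightarrow>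
     \<bar>poly q a - poly q b - (poly q a' - poly q b')\<bar> \<le> K * (\<bar>(a - b) - (a' - b')\<bar> + \<bar>a' - b'\<bar> * (\<bar>a - a'\<bar> + \<bar>b - b'\<bar>))" by blast
  obtain L where L: "L \<ge> 0" "\<And>a b. \<bar>a\<bar> \<le> R \<Longrightarrow> \<bar>b\<bar> \<le> R \<Longrightarrow> \<bar>poly q a - poly q b\<bar> \<le> L * \<bar>a - b\<bar>"
    using polyB[OF R, of q] by auto
  obtain B where B: "B \<ge> 0" "\<And>a. \<bar>a\<bar> \<le> R \<Longrightarrow> \<bar>poly q a\<bar> \<le> B" using polyA[OF R, of q] by auto
  show ?case
  proof (intro exI[of _ "B + 2 * R * L + R * K + 2 * L"] conjI allI impI)
    show "0 \<le> B + 2 * R * L + R * K + 2 * L" using R B L K by simp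
    fix a b a' b' :: real assume a: "\<bar>a\<bar> \<le> R" and b: "\<bar>b\<bar> \<le> R" and a': "\<bar>a'\<bar> \<le> R" and b': "\<bar>b'\<bar> \<le> R"
    define D where "D = (a - b) - (a' - b')"
    define E where "E = a' - b'"
    define Z where "Z = \<bar>a - a'\<bar> + \<bar>b - b'\<bar>"
    have Z0: "0 \<le> Z" by (simp add: Z_def)
    let ?P = "poly (pCons c q)"
    let ?dq = "poly q a - poly q b - (poly q a' - poly q b')"
    have e: "?P a - ?P b - (?P a' - ?P b') = D * poly q a + E * (poly q a - poly q a') + (b - b') * (poly q a - poly q b) + b' * ?dq"
      by (simp add: D_def E_def algebra_simps)
    have 1: "\<bar>D * poly q a\<bar> \<le> B * \<bar>D\<bar>" unfolding abs_mult using mult_left_mono[OF B(2)[OF a], of "\<bar>D\<bar>"] by (simp add: mult.commute)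
    have 2: "\<bar>E * (poly q a - poly q a')\<bar> \<le> L * (\<bar>E\<bar> * Z)"
    proof -
      have "\<bar>E * (poly q a - poly q a')\<bar> \<le> \<bar>E\<bar> * (L * \<bar>a - a'\<bar>)" unfolding abs_mult
        by (intro mult_left_mono L(2) a a') auto
      also have "\<dots> \<le> \<bar>E\<bar> * (L * Z)" using L(1) by (intro mult_left_mono) (auto simp: Z_def)
      finally show ?thesis by (simp add: algebra_simps)
    qed
    have 3: "\<bar>(b - b') * (poly q a - poly q b)\<bar> \<le> 2 * R * L * \<bar>D\<bar> + L * (\<bar>E\<bar> * Z)"
    proof -
      have ab: "\<bar>a - b\<bar> \<le> \<bar>D\<bar> + \<bar>E\<bar>" by (simp add: D_def E_def)
      have "\<bar>(b - b') * (poly q a - poly q b)\<bar> \<le> \<bar>b - b'\<bar> * (L * \<bar>a - b\<bar>)" unfolding abs_mult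
        by (intro mult_left_mono L(2) a b) auto
      also have "\<dots> \<le> \<bar>b - b'\<bar> * (L * (\<bar>D\<bar> + \<bar>E\<bar>))" using L(1) ab by (intro mult_left_mono) auto
      also have "\<dots> = L * (\<bar>b - b'\<bar> * \<bar>D\<bar>) + L * (\<bar>E\<bar> * \<bar>b - b'\<bar>)" by (simp add: algebra_simps)
      also have "\<dots> \<le> L * (2 * R * \<bar>D\<bar>) + L * (\<bar>E\<bar> * Z)"
      proof -
        have x1: "\<bar>b - b'\<bar> * \<bar>D\<bar> \<le> 2 * R * \<bar>D\<bar>" using b b' by (intro mult_right_mono) auto
        have x2: "\<bar>E\<bar> * \<bar>b - b'\<bar> \<le> \<bar>E\<bar> * Z" by (intro mult_left_mono) (auto simp: Z_def)
        show ?thesis using mult_left_mono[OF x1 L(1)] mult_left_mono[OF x2 L(1)] by linarith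
      qed
      finally show ?thesis by (simp add: algebra_simps)
    qed
    have 4: "\<bar>b' * ?dq\<bar> \<le> R * (K * (\<bar>D\<bar> + \<bar>E\<bar> * Z))"
    proof -
      have "\<bar>?dq\<bar> \<le> K * (\<bar>D\<bar> + \<bar>E\<bar> * Z)" using K(2)[OF a b a' b'] by (simp add: D_def E_def Z_def)
      from mult_mono[OF b' this R abs_ge_zero] show ?thesis by (simp add: abs_mult)
    qed
    have "\<bar>?P a - ?P b - (?P a' - ?P b')\<bar> \<le> \<bar>D * poly q a\<bar> + \<bar>E * (poly q a - poly q a')\<bar> + \<bar>(b - b') * (poly q a - poly q b)\<bar> + \<bar>b' * ?dq\<bar>"
      unfolding e
      using abs_triangle_ineq[of "D * poly q a + E * (poly q a - poly q a') + (b - b') * (poly q a - poly q b)" "b' * ?dq"]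
        abs_triangle_ineq[of "D * poly q a + E * (poly q a - poly q a')" "(b - b') * (poly q a - poly q b)"]
        abs_triangle_ineq[of "D * poly q a" "E * (poly q a - poly q a')"] by linarith
    also have "\<dots> \<le> B * \<bar>D\<bar> + L * (\<bar>E\<bar> * Z) + (2 * R * L * \<bar>D\<bar> + L * (\<bar>E\<bar> * Z)) + R * (K * (\<bar>D\<bar> + \<bar>E\<bar> * Z))"
      by (rule add_mono[OF add_mono[OF add_mono[OF 1 2] 3] 4])
    also have "\<dots> \<le> (B + 2 * R * L + R * K + 2 * L) * (\<bar>D\<bar> + \<bar>E\<bar> * Z)"
    proof -
      have eq: "(B + 2 * R * L + R * K + 2 * L) * (\<bar>D\<bar> + \<bar>E\<bar> * Z) = 
        (B * \<bar>D\<bar> + L * (\<bar>E\<bar> * Z) + (2 * R * L * \<bar>D\<bar> + L * (\<bar>E\<bar> * Z)) + R * (K * (\<bar>D\<bar> + \<bar>E\<bar> * Z)))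
        + (B * (\<bar>E\<bar> * Z) + 2 * R * L * (\<bar>E\<bar> * Z) + 2 * L * \<bar>D\<bar>)"
        by algebra
      have "0 \<le> B * (\<bar>E\<bar> * Z)" "0 \<le> 2 * R * L * (\<bar>E\<bar> * Z)" "0 \<le> 2 * L * \<bar>D\<bar>"
        using B(1) L(1) R Z0 by simp_all
      then show ?thesis unfolding eq by linarith
    qed
    finally show "\<bar>?P a - ?P b - (?P a' - ?P b')\<bar> \<le> (B + 2 * R * L + R * K + 2 * L) * (\<bar>(a - b) - (a' - b')\<bar> + \<bar>a' - b'\<bar> * (\<bar>a - a'\<bar> + \<bar>b - b'\<bar>))"
      by (simp add: D_def E_def Z_def)
  qed
qed

lemma HF:
  assumes g: "g \<in> holder_space \<delta>"
  shows "\<And>x. x \<in> {0..1} \<Longrightarrow> \<bar>g x\<bar> \<le> (SUP x\<in>{0..1}. \<bar>g x\<bar>)"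
    and "0 \<le> (SUP x\<in>{0..1}. \<bar>g x\<bar>)"
    and "0 \<le> Sup (holder_quots \<delta> g)"
    and "\<And>x y. x \<in> {0..1} \<Longrightarrow> y \<in> {0..1} \<Longrightarrow> \<bar>g x - g y\<bar> \<le> Sup (holder_quots \<delta> g) * \<bar>x - y\<bar> powr \<delta>"
proof -
  have cg: "continuous_on {0..1} g" and bq: "bdd_above (holder_quots \<delta> g)" using g by (auto simp: holder_space_def)
  have "compact ((\<lambda>x. \<bar>g x\<bar>) ` {0..1})" by (intro compact_continuous_image continuous_intros cg) auto
  then have bs: "bdd_above ((\<lambda>x. \<bar>g x\<bar>) ` {0..1})" by (intro bounded_imp_bdd_above compact_imp_bounded)
  show S1: "\<And>x. x \<in> {0..1} \<Longrightarrow> \<bar>g x\<bar> \<le> (SUP x\<in>{0..1}. \<bar>g x\<bar>)" by (rule cSUP_upper[OF _ bs])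
  show "0 \<le> (SUP x\<in>{0..1}. \<bar>g x\<bar>)" using order_trans[OF abs_ge_zero S1[of 0]] by simp
  have mem: "\<bar>g x - g y\<bar> / \<bar>x - y\<bar> powr \<delta> \<in> holder_quots \<delta> g" if "x \<in> {0..1}" "y \<in> {0..1}" "x \<noteq> y" for x y
    using that unfolding holder_quots_def by blast
  have q: "\<bar>g x - g y\<bar> / \<bar>x - y\<bar> powr \<delta> \<le> Sup (holder_quots \<delta> g)" if "x \<in> {0..1}" "y \<in> {0..1}" "x \<noteq> y" for x y
    by (rule cSup_upper[OF mem[OF that] bq])
  have "\<bar>g 0 - g 1\<bar> / \<bar>0 - 1\<bar> powr \<delta> \<le> Sup (holder_quots \<delta> g)" by (rule q) auto
  then show S3: "0 \<le> Sup (holder_quots \<delta> g)" by (rule order_trans[rotated]) simp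
  show "\<bar>g x - g y\<bar> \<le> Sup (holder_quots \<delta> g) * \<bar>x - y\<bar> powr \<delta>" if "x \<in> {0..1}" "y \<in> {0..1}" for x y
  proof (cases "x = y")
    case True then show ?thesis using S3 by simp
  next
    case False
    then have pos: "0 < \<bar>x - y\<bar> powr \<delta>" by simp
    from q[OF that False] show ?thesis using pos by (simp add: divide_le_eq)
  qed
qed

lemma HN:
  assumes g: "g \<in> holder_space \<delta>"
  shows "\<And>x. x \<in> {0..1} \<Longrightarrow> \<bar>g x\<bar> \<le> holder_norm \<delta> g"
    and "0 \<le> holder_norm \<delta> g"
    and "\<And>x y. x \<in> {0..1} \<Longrightarrow> y \<in> {0..1} \<Longrightarrow> \<bar>g x - g y\<bar> \<le> holder_norm \<delta> g * \<bar>x - y\<bar> powr \<delta>"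
proof -
  note h = HF[OF g]
  show "\<bar>g x\<bar> \<le> holder_norm \<delta> g" if "x \<in> {0..1}" for x
    using h(1)[OF that] h(3) unfolding holder_norm_def by linarith
  show "0 \<le> holder_norm \<delta> g" using h(2,3) unfolding holder_norm_def by linarith
  show "\<bar>g x - g y\<bar> \<le> holder_norm \<delta> g * \<bar>x - y\<bar> powr \<delta>" if "x \<in> {0..1}" "y \<in> {0..1}" for x y
  proof -
    have "Sup (holder_quots \<delta> g) * \<bar>x - y\<bar> powr \<delta> \<le> holder_norm \<delta> g * \<bar>x - y\<bar> powr \<delta>"
      using h(2) by (intro mult_right_mono) (auto simp: holder_norm_def)
    with h(4)[OF that] show ?thesis by linarith
  qed
qed

lemma holder_diff:
  assumes u: "u \<in> holder_space \<delta>" and v: "v \<in> holder_space \<delta>"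
  shows "(\<lambda>x. u x - v x) \<in> holder_space \<delta>"
proof -
  have cu: "continuous_on {0..1} u" and cv: "continuous_on {0..1} v" using u v by (auto simp: holder_space_def)
  have "bdd_above (holder_quots \<delta> (\<lambda>x. u x - v x))"
  proof (rule bdd_aboveI)
    fix q assume "q \<in> holder_quots \<delta> (\<lambda>x. u x - v x)"
    then obtain x y where xy: "x \<in> {0..1}" "y \<in> {0..1}" "x \<noteq> y" and q: "q = \<bar>(u x - v x) - (u y - v y)\<bar> / \<bar>x - y\<bar> powr \<delta>"
      unfolding holder_quots_def by blast
    have pos: "0 < \<bar>x - y\<bar> powr \<delta>" using xy by simp
    have "\<bar>(u x - v x) - (u y - v y)\<bar> \<le> \<bar>u x - u y\<bar> + \<bar>v x - v y\<bar>" by simp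
    also have "\<dots> \<le> Sup (holder_quots \<delta> u) * \<bar>x - y\<bar> powr \<delta> + Sup (holder_quots \<delta> v) * \<bar>x - y\<bar> powr \<delta>"
      using HF(4)[OF u xy(1,2)] HF(4)[OF v xy(1,2)] by linarith
    finally show "q \<le> Sup (holder_quots \<delta> u) + Sup (holder_quots \<delta> v)"
      unfolding q using pos by (simp add: divide_le_eq algebra_simps)
  qed
  then show ?thesis using cu cv by (auto simp: holder_space_def intro!: continuous_intros)
qed

lemma REL:
  assumes "continuous_on {0..1} u"
  shows "F_coef p u k = - (sqrt 2 * (real k * pi)) * cc (\<lambda>x. poly p (u x)) k"
proof -
  have "(\<lambda>x. poly p (u x) * eig_fun_deriv k x) = (\<lambda>x. (sqrt 2 * (real k * pi)) * (poly p (u x) * cphi k x))"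
    by (auto simp: eig_fun_deriv_def cphi_def)
  then show ?thesis by (simp add: F_coef_def cc_def)
qed

lemma cc_diff:
  assumes "continuous_on {0..1} G1" "continuous_on {0..1} G2"
  shows "cc G1 k - cc G2 k = cc (\<lambda>x. G1 x - G2 x) k"
  unfolding cc_def
  by (subst integral_diff[symmetric]) (auto simp: algebra_simps intro!: integrable_continuous_interval continuous_intros assms)

lemma HT:
  "H_terms (-\<alpha>/2) (\<lambda>k. - (sqrt 2 * (real k * pi)) * cc G k) k = 2 * ((real (Suc k) * pi) powr (2 - \<alpha>) * (cc G (Suc k))^2)"
proof -
  define X where "X = real (Suc k) * pi"
  have X: "X > 0" by (simp add: X_def)
  have X2: "X^2 = X powr 2" using X by (simp add: powr_realpow)
  have f1: "eig_val (Suc k) powr (-\<alpha>/2) = X powr (- \<alpha>)"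
    unfolding eig_val_def X_def[symmetric] X2 powr_powr by simp
  have f2: "(- (sqrt 2 * X) * cc G (Suc k))^2 = 2 * X^2 * (cc G (Suc k))^2"
    by (simp add: power_mult_distrib)
  have f3: "X powr (- \<alpha>) * X^2 = X powr (2 - \<alpha>)"
  proof -
    have "X powr (2 - \<alpha>) = X powr 2 * X powr (- \<alpha>)" using powr_add[of X 2 "-\<alpha>"] by simp
    then show ?thesis using X2 by (simp add: mult.commute)
  qed
  have "H_terms (-\<alpha>/2) (\<lambda>k. - (sqrt 2 * (real k * pi)) * cc G k) k = eig_val (Suc k) powr (-\<alpha>/2) * (- (sqrt 2 * X) * cc G (Suc k))^2"
    unfolding H_terms_def X_def ..
  also have "\<dots> = X powr (- \<alpha>) * (2 * X^2 * (cc G (Suc k))^2)" by (simp only: f1 f2)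
  also have "\<dots> = 2 * ((X powr (- \<alpha>) * X^2) * (cc G (Suc k))^2)" by (simp only: mult_ac)
  also have "\<dots> = 2 * (X powr (2 - \<alpha>) * (cc G (Suc k))^2)" by (simp only: f3)
  finally show ?thesis unfolding X_def .
qed

theorem mainTheorem9:
  fixes \<alpha> \<delta> :: real and p :: "real poly"
  assumes "1 < \<alpha>" "\<alpha> \<le> 2" "1 - \<alpha>/2 < \<delta>" "\<delta> < 1"
  shows "(\<forall>u \<in> holder_space \<delta>. summable (H_terms (-\<alpha>/2) (F_coef p u)))
       \<and> (\<forall>R>0. \<exists>C>0. \<forall>u v. u \<in> holder_space \<delta> \<longrightarrow> v \<in> holder_space \<delta> \<longrightarrow>
             holder_norm \<delta> u \<le> R \<longrightarrow> holder_norm \<delta> v \<le> R \<longrightarrow>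
             H_norm (-\<alpha>/2) (\<lambda>k. F_coef p u k - F_coef p v k) \<le> C * holder_norm \<delta> (\<lambda>x. u x - v x))"
proof -
  define s where "s = 2 - \<alpha>"
  have s0: "0 \<le> s" and s1: "s < 2 * \<delta>" and d0: "0 < \<delta>" using assms by (auto simp: s_def)
  define A where "A = pi powr s / (2 * (1 - 2 powr (s - 2 * \<delta>)))"
  have q1: "2 powr (s - 2 * \<delta>) < 1" using powr_less_mono[of "s - 2 * \<delta>" 0 "2::real"] s1 by simp
  have A0: "0 \<le> A" unfolding A_def using q1 by simp
  have key: "summable (H_terms (-\<alpha>/2) (\<lambda>k. - (sqrt 2 * (real k * pi)) * cc G k))
      \<and> suminf (H_terms (-\<alpha>/2) (\<lambda>k. - (sqrt 2 * (real k * pi)) * cc G k)) \<le> 2 * (L^2 * A)"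
    if G: "continuous_on {0..1} G" and L: "0 \<le> L"
      and hG: "\<And>x y. x \<in> {0..1} \<Longrightarrow> y \<in> {0..1} \<Longrightarrow> \<bar>G x - G y\<bar> \<le> L * \<bar>x - y\<bar> powr \<delta>" for G L
  proof -
    have ht: "H_terms (-\<alpha>/2) (\<lambda>k. - (sqrt 2 * (real k * pi)) * cc G k)
        = (\<lambda>k. 2 * ((real (Suc k) * pi) powr s * (cc G (Suc k))^2))"
      by (rule ext) (simp only: HT s_def)
    note ws = weighted_sum[OF G L d0 hG s0 s1]
    show ?thesis unfolding ht
      using summable_mult[OF ws(1), of 2] suminf_mult[OF ws(1), of 2] ws(2) by (simp add: A_def)
  qed
  have part1: "summable (H_terms (-\<alpha>/2) (F_coef p u))" if u: "u \<in> holder_space \<delta>" for u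
  proof -
    have cu: "continuous_on {0..1} u" using u by (simp add: holder_space_def)
    define R0 where "R0 = holder_norm \<delta> u"
    have R0: "0 \<le> R0" using HN(2)[OF u] by (simp add: R0_def)
    obtain Lp where Lp: "Lp \<ge> 0" "\<And>a b. \<bar>a\<bar> \<le> R0 \<Longrightarrow> \<bar>b\<bar> \<le> R0 \<Longrightarrow> \<bar>poly p a - poly p b\<bar> \<le> Lp * \<bar>a - b\<bar>"
      using polyB[OF R0, of p] by auto
    have cG: "continuous_on {0..1} (\<lambda>x. poly p (u x))" by (intro continuous_intros cu)
    have hG: "\<bar>poly p (u x) - poly p (u y)\<bar> \<le> (Lp * R0) * \<bar>x - y\<bar> powr \<delta>" if "x \<in> {0..1}" "y \<in> {0..1}" for x y
    proof -
      have "\<bar>poly p (u x) - poly p (u y)\<bar> \<le> Lp * \<bar>u x - u y\<bar>"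
        using Lp(2) HN(1)[OF u] that by (simp add: R0_def)
      also have "\<dots> \<le> Lp * (R0 * \<bar>x - y\<bar> powr \<delta>)"
        using HN(3)[OF u that] Lp(1) by (intro mult_left_mono) (auto simp: R0_def)
      finally show ?thesis by (simp add: mult.assoc)
    qed
    have F: "F_coef p u = (\<lambda>k. - (sqrt 2 * (real k * pi)) * cc (\<lambda>x. poly p (u x)) k)"
      by (rule ext) (rule REL[OF cu])
    show ?thesis unfolding F using key[OF cG _ hG] Lp(1) R0 by simp
  qed
  have part2: "\<exists>C>0. \<forall>u v. u \<in> holder_space \<delta> \<longrightarrow> v \<in> holder_space \<delta> \<longrightarrow>
             holder_norm \<delta> u \<le> R \<longrightarrow> holder_norm \<delta> v \<le> R \<longrightarrow>
             H_norm (-\<alpha>/2) (\<lambda>k. F_coef p u k - F_coef p v k) \<le> C * holder_norm \<delta> (\<lambda>x. u x - v x)"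
    if R: "R > 0" for R
  proof -
    obtain K where K: "K \<ge> 0" "\<And>a b a' b'. \<bar>a\<bar> \<le> R \<Longrightarrow> \<bar>b\<bar> \<le> R \<Longrightarrow> \<bar>a'\<bar> \<le> R \<Longrightarrow> \<bar>b'\<bar> \<le> R \<Longrightarrow>
     \<bar>poly p a - poly p b - (poly p a' - poly p b')\<bar> \<le> K * (\<bar>(a - b) - (a' - b')\<bar> + \<bar>a' - b'\<bar> * (\<bar>a - a'\<bar> + \<bar>b - b'\<bar>))"
      using polyC[of R p] R by auto
    define C where "C = sqrt (2 * A) * (K * (1 + 2 * R)) + 1"
    have C0: "C > 0" unfolding C_def using K(1) R A0 by (simp add: add_nonneg_pos)
    show ?thesis
    proof (intro exI[of _ C] conjI C0 allI impI)
      fix u v assume u: "u \<in> holder_space \<delta>" and v: "v \<in> holder_space \<delta>"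
        and uR: "holder_norm \<delta> u \<le> R" and vR: "holder_norm \<delta> v \<le> R"
      define w where "w = (\<lambda>x. u x - v x)"
      have w: "w \<in> holder_space \<delta>" unfolding w_def by (rule holder_diff[OF u v])
      define Nw where "Nw = holder_norm \<delta> w"
      have Nw: "0 \<le> Nw" using HN(2)[OF w] by (simp add: Nw_def)
      have cu: "continuous_on {0..1} u" and cv: "continuous_on {0..1} v" using u v by (auto simp: holder_space_def)
      define G where "G x = poly p (u x) - poly p (v x)" for x
      have cG: "continuous_on {0..1} G" unfolding G_def by (intro continuous_intros cu cv)
      define L where "L = K * (1 + 2 * R) * Nw"
      have L0: "0 \<le> L" unfolding L_def using K(1) R Nw by simp
      have hG: "\<bar>G x - G y\<bar> \<le> L * \<bar>x - y\<bar> powr \<delta>" if xy: "x \<in> {0..1}" "y \<in> {0..1}" for x y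
      proof -
        define d where "d = \<bar>x - y\<bar> powr \<delta>"
        have d0: "0 \<le> d" by (simp add: d_def)
        have bu: "\<bar>u z\<bar> \<le> R" "\<bar>v z\<bar> \<le> R" if "z \<in> {0..1}" for z
          using HN(1)[OF u that] HN(1)[OF v that] uR vR by linarith+
        have hu: "\<bar>u x - u y\<bar> \<le> R * d"
          using HN(3)[OF u xy] mult_right_mono[OF uR d0] by (simp add: d_def)
        have hv: "\<bar>v x - v y\<bar> \<le> R * d"
          using HN(3)[OF v xy] mult_right_mono[OF vR d0] by (simp add: d_def)
        have hw: "\<bar>(u x - v x) - (u y - v y)\<bar> \<le> Nw * d"
          using HN(3)[OF w xy] by (simp add: w_def Nw_def d_def)
        have bw: "\<bar>u y - v y\<bar> \<le> Nw" using HN(1)[OF w xy(2)] by (simp add: w_def Nw_def)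
        have "\<bar>G x - G y\<bar> \<le> K * (\<bar>(u x - v x) - (u y - v y)\<bar> + \<bar>u y - v y\<bar> * (\<bar>u x - u y\<bar> + \<bar>v x - v y\<bar>))"
          unfolding G_def by (rule K(2)[OF bu(1)[OF xy(1)] bu(2)[OF xy(1)] bu(1)[OF xy(2)] bu(2)[OF xy(2)]])
        also have "\<dots> \<le> K * (Nw * d + Nw * (R * d + R * d))"
        proof (rule mult_left_mono[OF _ K(1)], rule add_mono[OF hw])
          show "\<bar>u y - v y\<bar> * (\<bar>u x - u y\<bar> + \<bar>v x - v y\<bar>) \<le> Nw * (R * d + R * d)"
            by (rule mult_mono[OF bw add_mono[OF hu hv] Nw]) simp
        qed
        also have "\<dots> = L * d" by (simp add: L_def algebra_simps)
        finally show ?thesis by (simp add: d_def)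
      qed
      have diff: "(\<lambda>k. F_coef p u k - F_coef p v k) = (\<lambda>k. - (sqrt 2 * (real k * pi)) * cc G k)"
      proof (rule ext)
        fix k
        have "F_coef p u k - F_coef p v k = - (sqrt 2 * (real k * pi)) * (cc (\<lambda>x. poly p (u x)) k - cc (\<lambda>x. poly p (v x)) k)"
          unfolding REL[OF cu] REL[OF cv] by (simp add: algebra_simps)
        also have "cc (\<lambda>x. poly p (u x)) k - cc (\<lambda>x. poly p (v x)) k = cc G k"
          unfolding G_def by (rule cc_diff) (intro continuous_intros cu cv)+
        finally show "F_coef p u k - F_coef p v k = - (sqrt 2 * (real k * pi)) * cc G k" .
      qed
      note kk = key[OF cG L0 hG]
      have "H_norm (-\<alpha>/2) (\<lambda>k. F_coef p u k - F_coef p v k) \<le> sqrt (2 * (L^2 * A))"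
        unfolding H_norm_def diff using kk by (intro real_sqrt_le_mono) simp
      also have "sqrt (2 * (L^2 * A)) = L * sqrt (2 * A)"
        using L0 by (simp add: real_sqrt_mult algebra_simps)
      also have "\<dots> = sqrt (2 * A) * (K * (1 + 2 * R)) * Nw" by (simp add: L_def algebra_simps)
      also have "\<dots> \<le> C * Nw" unfolding C_def using Nw by (intro mult_right_mono) auto
      finally show "H_norm (-\<alpha>/2) (\<lambda>k. F_coef p u k - F_coef p v k) \<le> C * holder_norm \<delta> (\<lambda>x. u x - v x)"
        by (simp add: Nw_def w_def)
    qed
  qed
  show ?thesis using part1 part2 by blast
qed

end
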